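(* Let $\mathcal O$ be the suboperad of $\mathrm{CNCB}$ generated by $a:=T_{bbb}$ and $r:=T_{ubu}$. Then $\mathcal O$ admits the presentation with generators $a,r$ of arity $2$ and the single relation $$r\circ_1 r=r\circ_2 r.$$ That is, $\mathcal O$ is isomorphic, via the morphism sending the generators to $a$ and $r$, to the quotient of the free operad on two binary generators by the operadic congruence generated by this relation.
   Context: For $n\ge2$, a bicoloured noncrossing configuration (BNC) of size $n$ is a regular polygon with vertices $1,\dots,n+1$ clockwise, together with disjoint sets of blue and red arcs among the arcs $(i,j)$, $1\le i<j\le n+1$. The arcs $(i,i+1)$ are the edges ($i$th edge), $(1,n+1)$ is the base, and the others are diagonals. Coloured arcs are pairwise noncrossing ($(i,j),(k,l)$ cross iff $i<k<j<l$ or $k<i<l<j$), and red arcs are diagonals. There is one BNC of size $1$, a blue segment, which is the unit. The operad $\mathrm{CNCB}$ has the BNCs as elements (arity = size). Its composition $\mathfrak C\circ_i\mathfrak D$ ($\mathfrak C$ of size $n$, $\mathfrak D$ of size $m$) glues the base of $\mathfrak D$ on the $i$th edge of $\mathfrak C$. Arcs $(a,b)$ of $\mathfrak C$ become $(\sigma(a),\sigma(b))$ with $\sigma(v)=v$ for $v\le i$ and $v+m-1$ otherwise, and arcs $(a,b)$ of $\mathfrak D$ become $(a+i-1,b+i-1)$, keeping colours. The exception is the arc $(i,i+m)$, which is red if the $i$th edge of $\mathfrak C$ and the base of $\mathfrak D$ are both uncoloured, blue if both are blue, and uncoloured otherwise. For $x,y,z\in\{b,u\}$, $T_{xyz}$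 denotes the BNC of size $2$ (a triangle with vertices $1,2,3$) whose first edge $(1,2)$ has colour $x$, whose base $(1,3)$ has colour $y$, and whose second edge $(2,3)$ has colour $z$, where $b$ = blue and $u$ = uncoloured. The suboperad generated by a set is the smallest suboperad containing it. *)

theory Defs
  imports Main
begin

text \<open>A BNC of size n: polygon with vertices 1..n+1; arcs are pairs (i,j) with
  1 <= i < j <= n+1; blue and red arc sets.\<close>

record bnc =
  bsize :: nat
  blue :: "(nat \<times> nat) set"
  red  :: "(nat \<times> nat) set"

definition is_arc :: "nat \<Rightarrow> nat \<times> nat \<Rightarrow> bool" where
  "is_arc n e \<longleftrightarrow> 1 \<le> fst e \<and> fst e < snd e \<and> snd e \<le> n + 1"

definition is_edge :: "nat \<times> nat \<Rightarrow> bool" where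
  "is_edge e \<longleftrightarrow> snd e = fst e + 1"

definition is_base :: "nat \<Rightarrow> nat \<times> nat \<Rightarrow> bool" where
  "is_base n e \<longleftrightarrow> e = (1, n + 1)"

definition is_diagonal :: "nat \<Rightarrow> nat \<times> nat \<Rightarrow> bool" where
  "is_diagonal n e \<longleftrightarrow> is_arc n e \<and> \<not> is_edge e \<and> \<not> is_base n e"

definition crossing :: "nat \<times> nat \<Rightarrow> nat \<times> nat \<Rightarrow> bool" where
  "crossing e f \<longleftrightarrow>
     (case e of (i, j) \<Rightarrow> case f of (k, l) \<Rightarrow> (i < k \<and> k < j \<and> j < l) \<or> (k < i \<and> i < l \<and> l < j))"

definition bnc_unit :: bnc where
  "bnc_unit = \<lparr>bsize = 1, blue = {(1, 2)}, red = {}\<rparr>"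

definition is_bnc :: "bnc \<Rightarrow> bool" where
  "is_bnc C \<longleftrightarrow>
     C = bnc_unit \<or>
     (bsize C \<ge> 2 \<and>
      (\<forall>e \<in> blue C. is_arc (bsize C) e) \<and>
      (\<forall>e \<in> red C. is_diagonal (bsize C) e) \<and>
      blue C \<inter> red C = {} \<and>
      (\<forall>e \<in> blue C \<union> red C. \<forall>f \<in> blue C \<union> red C. \<not> crossing e f))"

text \<open>Partial composition C o_i D (glue base of D on the i-th edge of C).\<close>
definition bnc_comp :: "bnc \<Rightarrow> nat \<Rightarrow> bnc \<Rightarrow> bnc" where
  "bnc_comp C i D =
    (let n = bsize C; m = bsize D;
         \<sigma> = (\<lambda>v::nat. if v \<le> i then v else v + m - 1);
         sC = (\<lambda>(a, b). (\<sigma> a, \<sigma> b));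
         sD = (\<lambda>(a, b). (a + i - 1, b + i - 1));
         eC = (i, i + 1); bD = (1, m + 1);
         eC_blue = (eC \<in> blue C); bD_blue = (bD \<in> blue D);
         eC_unc = (eC \<notin> blue C \<and> eC \<notin> red C);
         bD_unc = (bD \<notin> blue D \<and> bD \<notin> red D)
     in \<lparr>bsize = n + m - 1,
         blue = sC ` (blue C - {eC}) \<union> sD ` (blue D - {bD})
                \<union> (if eC_blue \<and> bD_blue then {(i, i + m)} else {}),
         red = sC ` (red C - {eC}) \<union> sD ` (red D - {bD})
                \<union> (if eC_unc \<and> bD_unc then {(i, i + m)} else {})\<rparr>)"

text \<open>T_bbb and T_ubu (vertices 1,2,3; first edge (1,2), base (1,3), second edge (2,3)).\<close>
definition T_bbb :: bnc where
  "T_bbb = \<lparr>bsize = 2, blue = {(1, 2), (1, 3), (2, 3)}, red = {}\<rparr>"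

definition T_ubu :: bnc where
  "T_ubu = \<lparr>bsize = 2, blue = {(1, 3)}, red = {}\<rparr>"

inductive_set gen_sub :: "bnc set" where
  unit: "bnc_unit \<in> gen_sub"
| gen_a: "T_bbb \<in> gen_sub"
| gen_r: "T_ubu \<in> gen_sub"
| comp: "C \<in> gen_sub \<Longrightarrow> D \<in> gen_sub \<Longrightarrow> is_bnc C \<Longrightarrow> is_bnc D \<Longrightarrow>
         1 \<le> i \<Longrightarrow> i \<le> bsize C \<Longrightarrow> bnc_comp C i D \<in> gen_sub"

datatype gen = GA | GR

text \<open>Planar trees with internal binary nodes labelled by generators; Leaf = unit.\<close>
datatype ftree = Leaf | Node gen ftree ftree

fun arity :: "ftree \<Rightarrow> nat" where
  "arity Leaf = 1"
| "arity (Node g l r) = arity l + arity r"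

fun graft :: "ftree \<Rightarrow> nat \<Rightarrow> ftree \<Rightarrow> ftree" where
  "graft Leaf i s = (if i = 1 then s else Leaf)"
| "graft (Node g l r) i s =
     (if i \<le> arity l then Node g (graft l i s) r
      else Node g l (graft r (i - arity l) s))"

definition gtree :: "gen \<Rightarrow> ftree" where
  "gtree g = Node g Leaf Leaf"

inductive fcong :: "ftree \<Rightarrow> ftree \<Rightarrow> bool" where
  rel: "fcong (graft (gtree GR) 1 (gtree GR)) (graft (gtree GR) 2 (gtree GR))"
| refl: "fcong t t"
| sym: "fcong s t \<Longrightarrow> fcong t s"
| trans: "fcong s t \<Longrightarrow> fcong t u \<Longrightarrow> fcong s u"
| ctx_out: "fcong s t \<Longrightarrow> 1 \<le> i \<Longrightarrow> i \<le> arity u \<Longrightarrow> fcong (graft u i s) (graft u i t)"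
| ctx_in: "fcong s t \<Longrightarrow> 1 \<le> i \<Longrightarrow> i \<le> arity s \<Longrightarrow> i \<le> arity t \<Longrightarrow>
           fcong (graft s i u) (graft t i u)"

fun gen_bnc :: "gen \<Rightarrow> bnc" where
  "gen_bnc GA = T_bbb"
| "gen_bnc GR = T_ubu"

fun feval :: "ftree \<Rightarrow> bnc" where
  "feval Leaf = bnc_unit"
| "feval (Node g l r) = bnc_comp (bnc_comp (gen_bnc g) 2 (feval r)) 1 (feval l)"

end

theory Submission
  imports Defs
begin


definition shift :: "nat \<Rightarrow> (nat \<times> nat) set \<Rightarrow> (nat \<times> nat) set" where
  "shift k S = (\<lambda>(a,b). (a+k,b+k)) ` S"

lemma mem_shift[simp]: "(x,y) \<in> shift k S \<longleftrightarrow> k \<le> x \<and> k \<le> y \<and> (x-k,y-k) \<in> S"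
proof
  assume "(x,y) \<in> shift k S"
  then show "k \<le> x \<and> k \<le> y \<and> (x-k,y-k) \<in> S" unfolding shift_def by auto
next
  assume "k \<le> x \<and> k \<le> y \<and> (x-k,y-k) \<in> S"
  then show "(x,y) \<in> shift k S" unfolding shift_def
    by (intro rev_image_eqI[of "(x-k,y-k)"]) auto
qed

fun Bl :: "ftree \<Rightarrow> (nat \<times> nat) set" where
  "Bl Leaf = {(1,2)}"
| "Bl (Node g l r) = insert (1, arity l + arity r + 1)
     ((Bl l - {(1, arity l + 1)}) \<union> shift (arity l) (Bl r - {(1, arity r + 1)})
      \<union> (if g = GA then {(1, arity l + 1), (arity l + 1, arity l + arity r + 1)} else {}))"

lemma arity_pos: "arity t \<ge> 1"
  by (induction t) auto

lemma mem_Bl_Node: "(x,y) \<in> Bl (Node g l r) \<longleftrightarrow>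
   (x,y) = (1, arity l + arity r + 1) \<or> ((x,y) \<in> Bl l \<and> (x,y) \<noteq> (1, arity l + 1))
   \<or> (arity l \<le> x \<and> arity l \<le> y \<and> (x - arity l, y - arity l) \<in> Bl r \<and> (x - arity l, y - arity l) \<noteq> (1, arity r + 1))
   \<or> (g = GA \<and> ((x,y) = (1, arity l + 1) \<or> (x,y) = (arity l + 1, arity l + arity r + 1)))"
  by auto

lemma Bl_range: "(a,b) \<in> Bl t \<Longrightarrow> 1 \<le> a \<and> a < b \<and> b \<le> arity t + 1"
proof (induction t arbitrary: a b)
  case Leaf then show ?case by auto
next
  case (Node g l r)
  have "arity l \<ge> 1" "arity r \<ge> 1" using arity_pos[of l] arity_pos[of r] by auto
  with Node.prems show ?case
    apply (simp only: mem_Bl_Node)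
    apply (elim disjE conjE)
    apply (auto dest!: Node.IH)
    done
qed

lemma Bl_base: "(1, arity t + 1) \<in> Bl t"
  by (cases t) auto


definition mk :: "nat \<Rightarrow> (nat \<times> nat) set \<Rightarrow> bnc" where
  "mk n B = \<lparr>bsize = n, blue = B, red = {}\<rparr>"

definition compB :: "(nat \<times> nat) set \<Rightarrow> nat \<Rightarrow> nat \<Rightarrow> (nat \<times> nat) set \<Rightarrow> (nat \<times> nat) set" where
  "compB S i m T = (\<lambda>(a,b). (if a \<le> i then a else a + m - 1, if b \<le> i then b else b + m - 1)) ` (S - {(i,i+1)})
     \<union> (\<lambda>(a,b). (a + i - 1, b + i - 1)) ` (T - {(1,m+1)})
     \<union> (if (i,i+1) \<in> S then {(i,i+m)} else {})"

lemma comp_mk: "(1,m+1) \<in> T \<Longrightarrow> bnc_comp (mk n S) i (mk m T) = mk (n+m-1) (compB S i m T)"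
  unfolding bnc_comp_def Let_def by (simp add: mk_def compB_def cong: if_cong)

lemma mem_compB:
  assumes "1 \<le> i" "1 \<le> m"
  shows "(x,y) \<in> compB S i m T \<longleftrightarrow>
    ((x \<le> i \<or> i + m \<le> x) \<and> (y \<le> i \<or> i + m \<le> y) \<and>
       (if x \<le> i then x else x + 1 - m, if y \<le> i then y else y + 1 - m) \<in> S \<and>
       (if x \<le> i then x else x + 1 - m, if y \<le> i then y else y + 1 - m) \<noteq> (i, i+1))
    \<or> (i \<le> x + 1 \<and> i \<le> y + 1 \<and> (x + 1 - i, y + 1 - i) \<in> T \<and> (x + 1 - i, y + 1 - i) \<noteq> (1, m+1))
    \<or> ((i,i+1) \<in> S \<and> (x,y) = (i, i+m))" (is "?L \<longleftrightarrow> ?R")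
proof
  assume ?L
  then show ?R using assms unfolding compB_def
    by (auto split: if_splits)
next
  assume ?R
  then consider (A) "(x \<le> i \<or> i + m \<le> x) \<and> (y \<le> i \<or> i + m \<le> y) \<and>
       (if x \<le> i then x else x + 1 - m, if y \<le> i then y else y + 1 - m) \<in> S \<and>
       (if x \<le> i then x else x + 1 - m, if y \<le> i then y else y + 1 - m) \<noteq> (i, i+1)"
    | (B) "i \<le> x + 1 \<and> i \<le> y + 1 \<and> (x + 1 - i, y + 1 - i) \<in> T \<and> (x + 1 - i, y + 1 - i) \<noteq> (1, m+1)"
    | (C) "(i,i+1) \<in> S \<and> (x,y) = (i, i+m)" by blast
  then show ?L
  proof cases
    case A
    show ?thesis unfolding compB_def
      apply (rule UnI1, rule UnI1)
      apply (rule rev_image_eqI[where x="(if x \<le> i then x else x + 1 - m, if y \<le> i then y else y + 1 - m)"])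
      using A assms by auto
  next
    case B
    show ?thesis unfolding compB_def
      apply (rule UnI1, rule UnI2)
      apply (rule rev_image_eqI[where x="(x + 1 - i, y + 1 - i)"])
      using B assms by auto
  next
    case C then show ?thesis unfolding compB_def by auto
  qed
qed

definition Gs :: "gen \<Rightarrow> (nat \<times> nat) set" where
  "Gs g = (if g = GA then {(1,2),(1,3),(2,3)} else {(1,3)})"

lemma gen_mk: "gen_bnc g = mk 2 (Gs g)"
  by (cases g) (auto simp: mk_def Gs_def T_bbb_def T_ubu_def)

lemma unit_mk: "bnc_unit = mk 1 {(1,2)}"
  by (simp add: mk_def bnc_unit_def)

lemma compB1_GA:
  assumes q: "1 \<le> q"
  and Rr: "\<And>a b. (a,b) \<in> Sr \<Longrightarrow> 1 \<le> a \<and> a < b \<and> b \<le> q + 1"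
  shows "compB (Gs GA) 2 q Sr = {(1,2),(1,q+2),(2,q+2)} \<union> shift 1 (Sr - {(1,q+1)})"
proof (rule set_eqI, clarify)
  fix x y
  show "(x,y) \<in> compB (Gs GA) 2 q Sr \<longleftrightarrow> (x,y) \<in> {(1,2),(1,q+2),(2,q+2)} \<union> shift 1 (Sr - {(1,q+1)})"
    using q
    apply (simp only: mem_compB mem_shift)
    apply (auto simp: Gs_def split: if_splits dest: Rr)
    done
qed


lemma compB1_GR:
  assumes q: "1 \<le> q"
  and Rr: "\<And>a b. (a,b) \<in> Sr \<Longrightarrow> 1 \<le> a \<and> a < b \<and> b \<le> q + 1"
  shows "compB (Gs GR) 2 q Sr = {(1,q+2)} \<union> shift 1 (Sr - {(1,q+1)})"
proof (rule set_eqI, clarify)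
  fix x y
  show "(x,y) \<in> compB (Gs GR) 2 q Sr \<longleftrightarrow> (x,y) \<in> {(1,q+2)} \<union> shift 1 (Sr - {(1,q+1)})"
    using q
    apply (simp only: mem_compB mem_shift)
    apply (auto simp: Gs_def split: if_splits dest: Rr)
    done
qed

lemma compB2_GA:
  assumes p: "1 \<le> p" and q: "1 \<le> q"
  and Rl: "\<And>a b. (a,b) \<in> Sl \<Longrightarrow> 1 \<le> a \<and> a < b \<and> b \<le> p + 1"
  and Rr: "\<And>a b. (a,b) \<in> Sr \<Longrightarrow> 1 \<le> a \<and> a < b \<and> b \<le> q + 1"
  shows "compB ({(1,2),(1,q+2),(2,q+2)} \<union> shift 1 (Sr - {(1,q+1)})) 1 p Sl =
     insert (1, p + q + 1) ((Sl - {(1, p + 1)}) \<union> shift p (Sr - {(1, q + 1)})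
      \<union> {(1, p + 1), (p + 1, p + q + 1)})"
proof (rule set_eqI, clarify)
  fix x y
  show "(x,y) \<in> compB ({(1,2),(1,q+2),(2,q+2)} \<union> shift 1 (Sr - {(1,q+1)})) 1 p Sl \<longleftrightarrow> (x,y) \<in> insert (1, p + q + 1) ((Sl - {(1, p + 1)}) \<union> shift p (Sr - {(1, q + 1)})
      \<union> {(1, p + 1), (p + 1, p + q + 1)})"
    using p q
    apply (simp only: mem_compB mem_shift)
    apply (auto split: if_splits dest: Rl Rr)
    done
qed

lemma compB2_GR:
  assumes p: "1 \<le> p" and q: "1 \<le> q"
  and Rl: "\<And>a b. (a,b) \<in> Sl \<Longrightarrow> 1 \<le> a \<and> a < b \<and> b \<le> p + 1"
  and Rr: "\<And>a b. (a,b) \<in> Sr \<Longrightarrow> 1 \<le> a \<and> a < b \<and> b \<le> q + 1"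
  shows "compB ({(1,q+2)} \<union> shift 1 (Sr - {(1,q+1)})) 1 p Sl =
     insert (1, p + q + 1) ((Sl - {(1, p + 1)}) \<union> shift p (Sr - {(1, q + 1)}))"
proof (rule set_eqI, clarify)
  fix x y
  show "(x,y) \<in> compB ({(1,q+2)} \<union> shift 1 (Sr - {(1,q+1)})) 1 p Sl \<longleftrightarrow> (x,y) \<in> insert (1, p + q + 1) ((Sl - {(1, p + 1)}) \<union> shift p (Sr - {(1, q + 1)}))"
    using p q
    apply (simp only: mem_compB mem_shift)
    apply (auto split: if_splits dest: Rl Rr)
    done
qed


lemma Bl_Node_eq: "Bl (Node g l r) = compB (compB (Gs g) 2 (arity r) (Bl r)) 1 (arity l) (Bl l)"
proof -
  have p: "1 \<le> arity l" and q: "1 \<le> arity r" using arity_pos[of l] arity_pos[of r] by auto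
  show ?thesis
  proof (cases g)
    case GA
    then show ?thesis using compB1_GA[OF q Bl_range] compB2_GA[OF p q Bl_range Bl_range] by simp
  next
    case GR
    then show ?thesis using compB1_GR[OF q Bl_range] compB2_GR[OF p q Bl_range Bl_range] by simp
  qed
qed

lemma feval_mk: "feval t = mk (arity t) (Bl t)"
proof (induction t)
  case Leaf then show ?case by (simp add: unit_mk)
next
  case (Node g l r)
  have ar: "2 + arity r - 1 + arity l - 1 = arity (Node g l r)" using arity_pos[of r] by simp
  have "feval (Node g l r) = bnc_comp (bnc_comp (mk 2 (Gs g)) 2 (mk (arity r) (Bl r))) 1 (mk (arity l) (Bl l))"
    using Node.IH by (simp only: feval.simps gen_mk)
  also have "\<dots> = bnc_comp (mk (2 + arity r - 1) (compB (Gs g) 2 (arity r) (Bl r))) 1 (mk (arity l) (Bl l))"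
    by (simp only: comp_mk[OF Bl_base])
  also have "\<dots> = mk (2 + arity r - 1 + arity l - 1) (compB (compB (Gs g) 2 (arity r) (Bl r)) 1 (arity l) (Bl l))"
    by (rule comp_mk[OF Bl_base])
  also have "\<dots> = mk (arity (Node g l r)) (Bl (Node g l r))"
    by (simp only: ar Bl_Node_eq)
  finally show ?case .
qed


definition NS :: "gen \<Rightarrow> nat \<Rightarrow> nat \<Rightarrow> (nat \<times> nat) set \<Rightarrow> (nat \<times> nat) set \<Rightarrow> (nat \<times> nat) set" where
  "NS g p q Sl Sr = insert (1, p + q + 1) ((Sl - {(1, p + 1)}) \<union> shift p (Sr - {(1, q + 1)})
      \<union> (if g = GA then {(1, p + 1), (p + 1, p + q + 1)} else {}))"


definition sg :: "nat \<Rightarrow> nat \<Rightarrow> nat \<Rightarrow> nat" where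
  "sg i m v = (if v \<le> i then v else v + m - 1)"

lemma compB_I1: "(a,b) \<in> S \<Longrightarrow> (a,b) \<noteq> (i,i+1) \<Longrightarrow> (sg i m a, sg i m b) \<in> compB S i m T"
  unfolding compB_def sg_def by (rule UnI1, rule UnI1) (rule rev_image_eqI[where x="(a,b)"], auto)

lemma compB_I2: "(a,b) \<in> T \<Longrightarrow> (a,b) \<noteq> (1,m+1) \<Longrightarrow> (a+i-1, b+i-1) \<in> compB S i m T"
  unfolding compB_def by (rule UnI1, rule UnI2) (rule rev_image_eqI[where x="(a,b)"], auto)

lemma compB_I3: "(i,i+1) \<in> S \<Longrightarrow> (i,i+m) \<in> compB S i m T"
  unfolding compB_def by auto

lemma compB_E:
  assumes "(x,y) \<in> compB S i m T"
  obtains (A) a b where "(a,b) \<in> S" "(a,b) \<noteq> (i,i+1)" "x = sg i m a" "y = sg i m b"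
  | (B) a b where "(a,b) \<in> T" "(a,b) \<noteq> (1,m+1)" "x = a+i-1" "y = b+i-1"
  | (C) "(i,i+1) \<in> S" "x = i" "y = i + m"
  using assms unfolding compB_def sg_def by (auto split: if_splits)

lemma mem_NS: "(x,y) \<in> NS g p q Sl Sr \<longleftrightarrow> (x,y) = (1,p+q+1) \<or> ((x,y) \<in> Sl \<and> (x,y) \<noteq> (1,p+1))
   \<or> (p \<le> x \<and> p \<le> y \<and> (x-p,y-p) \<in> Sr \<and> (x-p,y-p) \<noteq> (1,q+1))
   \<or> (g = GA \<and> ((x,y) = (1,p+1) \<or> (x,y) = (p+1,p+q+1)))"
  unfolding NS_def by auto

lemma NS_E:
  assumes "(x,y) \<in> NS g p q Sl Sr"
  obtains (base) "x = 1" "y = p+q+1"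
  | (left) "(x,y) \<in> Sl" "(x,y) \<noteq> (1,p+1)"
  | (right) a b where "(a,b) \<in> Sr" "(a,b) \<noteq> (1,q+1)" "x = a + p" "y = b + p"
  | (ga1) "g = GA" "x = 1" "y = p + 1"
  | (ga2) "g = GA" "x = p + 1" "y = p + q + 1"
  using assms unfolding NS_def by (auto split: if_splits)



lemma NS_I_right: "(c,d) \<in> Sr \<Longrightarrow> (c,d) \<noteq> (1,q+1) \<Longrightarrow> (c+p, d+p) \<in> NS g p q Sl Sr"
  unfolding NS_def by auto

lemma NS_left:
  assumes p: "1 \<le> p" and q: "1 \<le> q" and m: "1 \<le> m" and i: "1 \<le> i" "i \<le> p"
  and Rl: "\<And>a b. (a,b) \<in> Sl \<Longrightarrow> 1 \<le> a \<and> a < b \<and> b \<le> p + 1"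
  and Rr: "\<And>a b. (a,b) \<in> Sr \<Longrightarrow> 1 \<le> a \<and> a < b \<and> b \<le> q + 1"
  and Rt: "\<And>a b. (a,b) \<in> T \<Longrightarrow> 1 \<le> a \<and> a < b \<and> b \<le> m + 1"
  shows "NS g (p+m-1) q (compB Sl i m T) Sr = compB (NS g p q Sl Sr) i m T"
proof (rule set_eqI)
  fix z :: "nat \<times> nat"
  obtain x y where z: "z = (x,y)" by (cases z)
  show "z \<in> NS g (p+m-1) q (compB Sl i m T) Sr \<longleftrightarrow> z \<in> compB (NS g p q Sl Sr) i m T"
    unfolding z
  proof
  assume "(x,y) \<in> NS g (p+m-1) q (compB Sl i m T) Sr"
  then show "(x,y) \<in> compB (NS g p q Sl Sr) i m T"
  proof (cases rule: NS_E)
    case base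
    have "(sg i m 1, sg i m (p+q+1)) \<in> compB (NS g p q Sl Sr) i m T"
      by (rule compB_I1) (use i q in \<open>auto simp: mem_NS\<close>)
    moreover have "sg i m 1 = x" "sg i m (p+q+1) = y" using base i q m by (auto simp: sg_def)
    ultimately show ?thesis by simp
  next
    case left
    from left(1) show ?thesis
    proof (cases rule: compB_E)
      case (A a b)
      have "(a,b) \<noteq> (1,p+1)" using A left(2) i m by (auto simp: sg_def)
      then have "(sg i m a, sg i m b) \<in> compB (NS g p q Sl Sr) i m T"
        using A by (intro compB_I1) (auto simp: mem_NS)
      then show ?thesis using A by simp
    next
      case (B a b)
      then show ?thesis using compB_I2[of a b T m i "NS g p q Sl Sr"] by simp
    next
      case C
      have "(i,i+1) \<noteq> (1,p+1)" using C left(2) by auto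
      then have "(i,i+1) \<in> NS g p q Sl Sr" using C by (auto simp: mem_NS)
      then show ?thesis using C compB_I3 by simp
    qed
  next
    case (right a b)
    have a1: "1 \<le> a" using Rr[OF right(1)] by simp
    have "(sg i m (a+p), sg i m (b+p)) \<in> compB (NS g p q Sl Sr) i m T"
      using right a1 i by (intro compB_I1) (auto simp: mem_NS)
    moreover have "sg i m (a+p) = x" "sg i m (b+p) = y" using right a1 i m Rr[OF right(1)] by (auto simp: sg_def)
    ultimately show ?thesis by simp
  next
    case ga1
    show ?thesis
    proof (cases "(1,p+1) = (i,i+1)")
      case True
      then have "(i,i+1) \<in> NS g p q Sl Sr" using ga1 by (auto simp: mem_NS)
      then have "(i,i+m) \<in> compB (NS g p q Sl Sr) i m T" by (rule compB_I3)
      then show ?thesis using True ga1 by (simp add: add.commute)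
    next
      case False
      have "(sg i m 1, sg i m (p+1)) \<in> compB (NS g p q Sl Sr) i m T"
        using False ga1 by (intro compB_I1) (auto simp: mem_NS)
      moreover have "sg i m 1 = x" "sg i m (p+1) = y" using ga1 i m by (auto simp: sg_def)
      ultimately show ?thesis by simp
    qed
  next
    case ga2
    have "(sg i m (p+1), sg i m (p+q+1)) \<in> compB (NS g p q Sl Sr) i m T"
      using ga2 i by (intro compB_I1) (auto simp: mem_NS)
    moreover have "sg i m (p+1) = x" "sg i m (p+q+1) = y" using ga2 i m by (auto simp: sg_def)
    ultimately show ?thesis by simp
  qed
next
  assume "(x,y) \<in> compB (NS g p q Sl Sr) i m T"
  then show "(x,y) \<in> NS g (p+m-1) q (compB Sl i m T) Sr"
  proof (cases rule: compB_E)
    case (A a b)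
    from A(1) show ?thesis
    proof (cases rule: NS_E)
      case base then show ?thesis using A i q m by (simp add: sg_def mem_NS)
    next
      case left
      have "(x,y) \<in> compB Sl i m T" using A left by (simp add: compB_I1)
      moreover have "(x,y) \<noteq> (1, p + m - 1 + 1)"
        using A left i m Rl[OF left(1)] by (auto simp: sg_def split: if_splits)
      ultimately show ?thesis by (simp add: mem_NS)
    next
      case (right c d)
      have cd: "1 \<le> c" "c < d" using Rr[OF right(1)] by simp_all
      have ex: "x = c + (p+m-1)" "y = d + (p+m-1)" using A(3,4) right(3,4) i m cd unfolding sg_def by auto
      show ?thesis using NS_I_right[OF right(1,2), where g=g and p="p+m-1" and Sl="compB Sl i m T"] ex by simp
    next
      case ga1 then show ?thesis using A i m by (simp add: sg_def mem_NS)
    next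
      case ga2 then show ?thesis using A i m by (simp add: sg_def mem_NS)
    qed
  next
    case (B a b)
    have "(x,y) \<in> compB Sl i m T" using B compB_I2[of a b T m i Sl] by simp
    moreover have "(x,y) \<noteq> (1, p + m - 1 + 1)"
      using B i m Rt[OF B(1)] by auto
    ultimately show ?thesis by (simp add: mem_NS)
  next
    case C
    from C(1) show ?thesis
    proof (cases rule: NS_E)
      case base then show ?thesis using i q by simp
    next
      case left
      have "(x,y) \<in> compB Sl i m T" using C left by (simp add: compB_I3)
      moreover have "(x,y) \<noteq> (1, p + m - 1 + 1)"
        using C left i m by auto
      ultimately show ?thesis by (simp add: mem_NS)
    next
      case (right c d)
      then show ?thesis using i Rr[OF right(1)] by simp
    next
      case ga1 then show ?thesis using C i m by (simp add: mem_NS)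
    next
      case ga2 then show ?thesis using i by simp
    qed
  qed
qed
qed


lemma NS_I_base: "(1,p+q+1) \<in> NS g p q Sl Sr" unfolding NS_def by auto
lemma NS_I_left: "(a,b) \<in> Sl \<Longrightarrow> (a,b) \<noteq> (1,p+1) \<Longrightarrow> (a,b) \<in> NS g p q Sl Sr" unfolding NS_def by auto
lemma NS_I_ga1: "g = GA \<Longrightarrow> (1,p+1) \<in> NS g p q Sl Sr" unfolding NS_def by auto
lemma NS_I_ga2: "g = GA \<Longrightarrow> (p+1,p+q+1) \<in> NS g p q Sl Sr" unfolding NS_def by auto

lemma NS_right:
  assumes p: "1 \<le> p" and q: "1 \<le> q" and m: "1 \<le> m" and i: "p < i" "i \<le> p + q"
  and Rl: "\<And>a b. (a,b) \<in> Sl \<Longrightarrow> 1 \<le> a \<and> a < b \<and> b \<le> p + 1"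
  and Rr: "\<And>a b. (a,b) \<in> Sr \<Longrightarrow> 1 \<le> a \<and> a < b \<and> b \<le> q + 1"
  and Rt: "\<And>a b. (a,b) \<in> T \<Longrightarrow> 1 \<le> a \<and> a < b \<and> b \<le> m + 1"
  shows "NS g p (q+m-1) Sl (compB Sr (i-p) m T) = compB (NS g p q Sl Sr) i m T"
proof (rule set_eqI)
  fix z :: "nat \<times> nat"
  obtain x y where z: "z = (x,y)" by (cases z)
  define j where "j = i - p"
  have j: "1 \<le> j" "j \<le> q" "i = j + p" using i unfolding j_def by auto
  show "z \<in> NS g p (q+m-1) Sl (compB Sr (i-p) m T) \<longleftrightarrow> z \<in> compB (NS g p q Sl Sr) i m T"
    unfolding z j_def[symmetric]
  proof
    assume "(x,y) \<in> NS g p (q+m-1) Sl (compB Sr j m T)"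
    then show "(x,y) \<in> compB (NS g p q Sl Sr) i m T"
    proof (cases rule: NS_E)
      case base
      have "(sg i m 1, sg i m (p+q+1)) \<in> compB (NS g p q Sl Sr) i m T"
        by (rule compB_I1[OF NS_I_base]) (use i p in auto)
      moreover have "sg i m 1 = x" "sg i m (p+q+1) = y" using base i q m by (auto simp: sg_def)
      ultimately show ?thesis by simp
    next
      case left
      have r: "1 \<le> x" "x < y" "y \<le> p + 1" using Rl[OF left(1)] by auto
      have "(sg i m x, sg i m y) \<in> compB (NS g p q Sl Sr) i m T"
        by (rule compB_I1[OF NS_I_left[OF left]]) (use i r in auto)
      moreover have "sg i m x = x" "sg i m y = y" using r i by (auto simp: sg_def)
      ultimately show ?thesis by simp
    next
      case (right a b)
      from right(1) show ?thesis
      proof (cases rule: compB_E)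
        case (A a' b')
        have r: "1 \<le> a'" "a' < b'" using Rr[OF A(1)] by auto
        have ne: "(a',b') \<noteq> (1,q+1)" using A right(2) j m by (auto simp: sg_def)
        have "(sg i m (a'+p), sg i m (b'+p)) \<in> compB (NS g p q Sl Sr) i m T"
          by (rule compB_I1[OF NS_I_right[OF A(1) ne]]) (use A(2) j in auto)
        moreover have "sg i m (a'+p) = x" "sg i m (b'+p) = y"
          using A(3,4) right(3,4) j m by (auto simp: sg_def)
        ultimately show ?thesis by simp
      next
        case (B a' b')
        have "(a'+i-1, b'+i-1) \<in> compB (NS g p q Sl Sr) i m T"
          by (rule compB_I2[OF B(1,2)])
        moreover have "a'+i-1 = x" "b'+i-1 = y" using B(3,4) right(3,4) j Rt[OF B(1)] by auto
        ultimately show ?thesis by simp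
      next
        case C
        have ne: "(j,j+1) \<noteq> (1,q+1)" using C right(2) by auto
        have "(j+p,j+1+p) \<in> NS g p q Sl Sr" by (rule NS_I_right[OF C(1) ne])
        then have "(i,i+1) \<in> NS g p q Sl Sr" using j by (simp add: add.commute)
        then have "(i,i+m) \<in> compB (NS g p q Sl Sr) i m T" by (rule compB_I3)
        then show ?thesis using C right(3,4) j by (simp add: add.commute add.left_commute)
      qed
    next
      case ga1
      have "(sg i m 1, sg i m (p+1)) \<in> compB (NS g p q Sl Sr) i m T"
        by (rule compB_I1[OF NS_I_ga1[OF ga1(1)]]) (use i p in auto)
      moreover have "sg i m 1 = x" "sg i m (p+1) = y" using ga1 i by (auto simp: sg_def)
      ultimately show ?thesis by simp
    next
      case ga2
      show ?thesis
      proof (cases "(p+1,p+q+1) = (i,i+1)")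
        case True
        then have "(i,i+1) \<in> NS g p q Sl Sr" using NS_I_ga2[OF ga2(1), of p q Sl Sr] by metis
        then have "(i,i+m) \<in> compB (NS g p q Sl Sr) i m T" by (rule compB_I3)
        then show ?thesis using True ga2 m by (simp add: add.commute add.left_commute)
      next
        case False
        have "(sg i m (p+1), sg i m (p+q+1)) \<in> compB (NS g p q Sl Sr) i m T"
          by (rule compB_I1[OF NS_I_ga2[OF ga2(1)] False])
        moreover have "sg i m (p+1) = x" "sg i m (p+q+1) = y" using ga2 i m by (auto simp: sg_def)
        ultimately show ?thesis by simp
      qed
    qed
  next
    assume "(x,y) \<in> compB (NS g p q Sl Sr) i m T"
    then show "(x,y) \<in> NS g p (q+m-1) Sl (compB Sr j m T)"
    proof (cases rule: compB_E)
      case (A a b)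
      from A(1) show ?thesis
      proof (cases rule: NS_E)
        case base
        have "(1, p+(q+m-1)+1) \<in> NS g p (q+m-1) Sl (compB Sr j m T)" by (rule NS_I_base)
        moreover have "x = 1" "y = p+(q+m-1)+1" using A(3,4) base i q m by (auto simp: sg_def)
        ultimately show ?thesis by simp
      next
        case left
        have r: "a < b" "b \<le> p + 1" using Rl[OF left(1)] by auto
        have "x = a" "y = b" using A(3,4) r i by (auto simp: sg_def)
        then show ?thesis using NS_I_left[OF left] by simp
      next
        case (right c d)
        have r: "1 \<le> c" "c < d" using Rr[OF right(1)] by auto
        have ne1: "(c,d) \<noteq> (j,j+1)" using A(2) right(3,4) j by auto
        have ne2: "(sg j m c, sg j m d) \<noteq> (1, q+m-1+1)"
          using right(2) r j m by (auto simp: sg_def)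
        have "(sg j m c + p, sg j m d + p) \<in> NS g p (q+m-1) Sl (compB Sr j m T)"
          by (rule NS_I_right[OF compB_I1[OF right(1) ne1] ne2])
        moreover have "sg j m c + p = x" "sg j m d + p = y"
          using A(3,4) right(3,4) j m by (auto simp: sg_def)
        ultimately show ?thesis by simp
      next
        case ga1
        have "x = 1" "y = p+1" using A(3,4) ga1 i by (auto simp: sg_def)
        then show ?thesis using NS_I_ga1[OF ga1(1)] by simp
      next
        case ga2
        have "x = p+1" "y = p+(q+m-1)+1" using A(3,4) ga2 i q m by (auto simp: sg_def)
        then show ?thesis using NS_I_ga2[OF ga2(1)] by simp
      qed
    next
      case (B a b)
      have r: "1 \<le> a" "a < b" "b \<le> m+1" using Rt[OF B(1)] by auto
      have ne: "(a+j-1, b+j-1) \<noteq> (1, q+m-1+1)" using B(2) r j by auto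
      have "(a+j-1+p, b+j-1+p) \<in> NS g p (q+m-1) Sl (compB Sr j m T)"
        by (rule NS_I_right[OF compB_I2[OF B(1,2)] ne])
      moreover have "a+j-1+p = x" "b+j-1+p = y" using B(3,4) r j by auto
      ultimately show ?thesis by simp
    next
      case C
      from C(1) show ?thesis
      proof (cases rule: NS_E)
        case base then show ?thesis using i p by simp
      next
        case left then show ?thesis using Rl[OF left(1)] i by simp
      next
        case (right c d)
        have cd: "c = j" "d = j + 1" using right(3,4) j by auto
        have ne: "(j, j+m) \<noteq> (1, q+m-1+1)" using right(2) cd m by auto
        have "(j+p, j+m+p) \<in> NS g p (q+m-1) Sl (compB Sr j m T)"
          by (rule NS_I_right[OF compB_I3[OF right(1)[unfolded cd]] ne])
        then show ?thesis using C(2,3) j by (simp add: add.commute add.left_commute)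
      next
        case ga1 then show ?thesis using i p by simp
      next
        case ga2
        have "x = p+1" "y = p+(q+m-1)+1" using C(2,3) ga2 m by auto
        then show ?thesis using NS_I_ga2[OF ga2(1)] by simp
      qed
    qed
  qed
qed




lemma Bl_NS: "Bl (Node g l r) = NS g (arity l) (arity r) (Bl l) (Bl r)"
  by (simp add: NS_def)

lemma compB_leaf:
  assumes Rt: "\<And>a b. (a,b) \<in> T \<Longrightarrow> 1 \<le> a \<and> a < b \<and> b \<le> m + 1"
  and m: "1 \<le> m" and bt: "(1,m+1) \<in> T"
  shows "compB {(1,2)} 1 m T = T"
proof (rule set_eqI)
  fix z :: "nat \<times> nat"
  obtain x y where z: "z = (x,y)" by (cases z)
  show "z \<in> compB {(1,2)} 1 m T \<longleftrightarrow> z \<in> T"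
    unfolding z using m bt by (auto simp: mem_compB dest: Rt)
qed

lemma graft_props:
  "1 \<le> i \<Longrightarrow> i \<le> arity s \<Longrightarrow>
   arity (graft s i t) = arity s + arity t - 1 \<and> Bl (graft s i t) = compB (Bl s) i (arity t) (Bl t)"
proof (induction s arbitrary: i)
  case Leaf
  then have "i = 1" by simp
  then show ?case using compB_leaf[of "Bl t" "arity t", OF Bl_range arity_pos Bl_base] by simp
next
  case (Node g l r)
  have p: "1 \<le> arity l" and q: "1 \<le> arity r" and m: "1 \<le> arity t"
    using arity_pos[of l] arity_pos[of r] arity_pos[of t] by auto
  show ?case
  proof (cases "i \<le> arity l")
    case True
    with Node.IH(1)[of i] Node.prems have ih: "arity (graft l i t) = arity l + arity t - 1"
      "Bl (graft l i t) = compB (Bl l) i (arity t) (Bl t)" by auto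
    have "Bl (graft (Node g l r) i t) = NS g (arity l + arity t - 1) (arity r) (compB (Bl l) i (arity t) (Bl t)) (Bl r)"
      using True ih by (simp only: graft.simps if_True Bl_NS)
    also have "\<dots> = compB (NS g (arity l) (arity r) (Bl l) (Bl r)) i (arity t) (Bl t)"
      by (rule NS_left[OF p q m Node.prems(1) True Bl_range Bl_range Bl_range])
    finally show ?thesis using True ih m by (simp add: Bl_NS del: Bl.simps)
  next
    case False
    with Node.IH(2)[of "i - arity l"] Node.prems have ih: "arity (graft r (i - arity l) t) = arity r + arity t - 1"
      "Bl (graft r (i - arity l) t) = compB (Bl r) (i - arity l) (arity t) (Bl t)" by auto
    have "Bl (graft (Node g l r) i t) = NS g (arity l) (arity r + arity t - 1) (Bl l) (compB (Bl r) (i - arity l) (arity t) (Bl t))"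
      using False ih by (simp only: graft.simps if_False Bl_NS)
    also have "\<dots> = compB (NS g (arity l) (arity r) (Bl l) (Bl r)) i (arity t) (Bl t)"
      using False Node.prems by (intro NS_right[OF p q m _ _ Bl_range Bl_range Bl_range]) auto
    finally show ?thesis using False ih q m by (simp add: Bl_NS del: Bl.simps)
  qed
qed

lemma feval_graft: "1 \<le> i \<Longrightarrow> i \<le> arity s \<Longrightarrow> feval (graft s i t) = bnc_comp (feval s) i (feval t)"
  using graft_props[of i s t] by (simp add: feval_mk comp_mk[OF Bl_base])

lemma crossing_pair: "crossing (a,b) (c,d) \<longleftrightarrow> (a < c \<and> c < b \<and> b < d) \<or> (c < a \<and> a < d \<and> d < b)"
  by (simp add: crossing_def)

lemma Bl_Node_E:
  assumes "(x,y) \<in> Bl (Node g l r)"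
  obtains (base) "x = 1" "y = arity l + arity r + 1"
  | (left) "(x,y) \<in> Bl l" "(x,y) \<noteq> (1,arity l+1)" "1 \<le> x" "x < y" "y \<le> arity l + 1"
  | (right) a b where "(a,b) \<in> Bl r" "(a,b) \<noteq> (1,arity r+1)" "x = a + arity l" "y = b + arity l"
      "1 \<le> a" "a < b" "b \<le> arity r + 1"
  | (ga1) "g = GA" "x = 1" "y = arity l + 1"
  | (ga2) "g = GA" "x = arity l + 1" "y = arity l + arity r + 1"
proof -
  from assms have "(x,y) \<in> NS g (arity l) (arity r) (Bl l) (Bl r)" by (simp only: Bl_NS)
  then show ?thesis
  proof (cases rule: NS_E)
    case base then show ?thesis using that(1) by simp
  next
    case left then show ?thesis using that(2) Bl_range[OF left(1)] by simp
  next
    case (right a b) then show ?thesis using that(3) Bl_range[OF right(1)] by simp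
  next
    case ga1 then show ?thesis using that(4) by simp
  next
    case ga2 then show ?thesis using that(5) by simp
  qed
qed

lemma Bl_nc: "(a1,b1) \<in> Bl t \<Longrightarrow> (c1,d1) \<in> Bl t \<Longrightarrow> \<not> crossing (a1,b1) (c1,d1)"
proof (induction t arbitrary: a1 b1 c1 d1)
  case Leaf then show ?case by (auto simp: crossing_pair)
next
  case (Node g l r)
  have p: "1 \<le> arity l" and q: "1 \<le> arity r" using arity_pos[of l] arity_pos[of r] by auto
  have IHl: "\<And>a b c d. (a,b) \<in> Bl l \<Longrightarrow> (c,d) \<in> Bl l \<Longrightarrow> a < c \<Longrightarrow> c < b \<Longrightarrow> b < d \<Longrightarrow> False"
    using Node.IH(1) by (auto simp: crossing_pair)
  have IHr: "\<And>a b c d. (a,b) \<in> Bl r \<Longrightarrow> (c,d) \<in> Bl r \<Longrightarrow> a < c \<Longrightarrow> c < b \<Longrightarrow> b < d \<Longrightarrow> False"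
    using Node.IH(2) by (auto simp: crossing_pair)
  show ?case unfolding crossing_pair
    using Node.prems(1,2) p q
    by (elim Bl_Node_E) (auto dest: IHl IHr)
qed




lemma is_bnc_feval: "is_bnc (feval t)"
proof (cases t)
  case Leaf then show ?thesis by (simp add: is_bnc_def)
next
  case (Node g l r)
  have p: "1 \<le> arity l" and q: "1 \<le> arity r" using arity_pos[of l] arity_pos[of r] by auto
  have arc: "\<forall>e \<in> Bl t. is_arc (arity t) e"
    using Bl_range[of _ _ t] unfolding is_arc_def by auto
  have nc: "\<forall>e \<in> Bl t. \<forall>f \<in> Bl t. \<not> crossing e f"
    using Bl_nc[of _ _ t] by auto
  show ?thesis unfolding is_bnc_def feval_mk mk_def
    using arc nc p q Node by auto
qed

lemma feval_gtree: "feval (gtree g) = gen_bnc g"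
  by (cases g) (auto simp: feval_mk gtree_def mk_def T_bbb_def T_ubu_def shift_def)

lemma bsize_feval: "bsize (feval t) = arity t"
  by (simp add: feval_mk mk_def)

lemma range_sub: "feval t \<in> gen_sub"
proof (induction t)
  case Leaf then show ?case by (simp add: gen_sub.unit)
next
  case (Node g l r)
  have G: "gen_bnc g \<in> gen_sub" by (cases g) (simp_all add: gen_sub.gen_a gen_sub.gen_r)
  have GB: "is_bnc (gen_bnc g)" using is_bnc_feval[of "gtree g"] by (simp add: feval_gtree)
  have ga: "arity (gtree g) = 2" by (simp add: gtree_def)
  have gr: "graft (gtree g) 2 r = Node g Leaf r" by (simp add: gtree_def)
  have X: "bnc_comp (gen_bnc g) 2 (feval r) = feval (Node g Leaf r)"
    using feval_graft[of 2 "gtree g" r] ga gr feval_gtree[of g] by (simp del: feval.simps)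
  have XS: "bnc_comp (gen_bnc g) 2 (feval r) \<in> gen_sub"
    by (rule gen_sub.comp[OF G Node.IH(2) GB is_bnc_feval]) (cases g, auto simp: T_bbb_def T_ubu_def)+
  have "bnc_comp (bnc_comp (gen_bnc g) 2 (feval r)) 1 (feval l) \<in> gen_sub"
    apply (rule gen_sub.comp[OF XS Node.IH(1)])
    using X is_bnc_feval[of "Node g Leaf r"] is_bnc_feval[of l] bsize_feval[of "Node g Leaf r"] by (simp_all del: feval.simps)
  then show ?case by simp
qed

lemma sub_range: "C \<in> gen_sub \<Longrightarrow> C \<in> range feval"
proof (induction rule: gen_sub.induct)
  case unit then show ?case by (metis feval.simps(1) rangeI)
next
  case gen_a then show ?case by (metis feval_gtree gen_bnc.simps(1) rangeI)
next
  case gen_r then show ?case by (metis feval_gtree gen_bnc.simps(2) rangeI)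
next
  case (comp C D i)
  then obtain s t where "C = feval s" "D = feval t" by auto
  then have "bnc_comp C i D = feval (graft s i t)" using comp feval_graft[of i s t] by (simp add: bsize_feval)
  then show ?case by (metis rangeI)
qed

lemma fcong_feval: "fcong s t \<Longrightarrow> feval s = feval t"
proof (induction rule: fcong.induct)
  case rel
  show ?case
    by (simp add: gtree_def feval_mk mk_def shift_def insert_commute)
next
  case (ctx_out s t i u) then show ?case using feval_graft by simp
next
  case (ctx_in s t i u) then show ?case using feval_graft by metis
qed simp_all




fun isGR :: "ftree \<Rightarrow> bool" where
  "isGR (Node GR l r) = True"
| "isGR _ = False"

fun normal :: "ftree \<Rightarrow> bool" where
  "normal Leaf = True"
| "normal (Node GA l r) = (normal l \<and> normal r)"
| "normal (Node GR l r) = (normal l \<and> normal r \<and> \<not> isGR l)"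

lemma fcong_nodeL: "fcong l l' \<Longrightarrow> fcong (Node g l r) (Node g l' r)"
proof -
  assume "fcong l l'"
  then have "fcong (graft (Node g Leaf r) 1 l) (graft (Node g Leaf r) 1 l')"
    by (rule fcong.ctx_out) auto
  then show ?thesis by simp
qed

lemma fcong_nodeR: "fcong r r' \<Longrightarrow> fcong (Node g l r) (Node g l r')"
proof -
  assume "fcong r r'"
  then have "fcong (graft (Node g l Leaf) (arity l + 1) r) (graft (Node g l Leaf) (arity l + 1) r')"
    by (rule fcong.ctx_out) auto
  then show ?thesis by simp
qed

lemma fcong_rot: "fcong (Node GR (Node GR a b) c) (Node GR a (Node GR b c))"
proof -
  have ac: "1 \<le> arity c" "1 \<le> arity b" "1 \<le> arity a" using arity_pos by auto
  have "fcong (graft (gtree GR) 1 (gtree GR)) (graft (gtree GR) 2 (gtree GR))" by (rule fcong.rel)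
  then have "fcong (Node GR (Node GR Leaf Leaf) Leaf) (Node GR Leaf (Node GR Leaf Leaf))"
    by (simp add: gtree_def)
  then have "fcong (graft (Node GR (Node GR Leaf Leaf) Leaf) 3 c) (graft (Node GR Leaf (Node GR Leaf Leaf)) 3 c)"
    by (rule fcong.ctx_in) auto
  then have 1: "fcong (Node GR (Node GR Leaf Leaf) c) (Node GR Leaf (Node GR Leaf c))"
    by simp
  then have "fcong (graft (Node GR (Node GR Leaf Leaf) c) 2 b) (graft (Node GR Leaf (Node GR Leaf c)) 2 b)"
    by (rule fcong.ctx_in) (use ac in auto)
  then have 2: "fcong (Node GR (Node GR Leaf b) c) (Node GR Leaf (Node GR b c))"
    by simp
  then have "fcong (graft (Node GR (Node GR Leaf b) c) 1 a) (graft (Node GR Leaf (Node GR b c)) 1 a)"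
    by (rule fcong.ctx_in) (use ac in auto)
  then show ?thesis by simp
qed

lemma norm_GR: "normal l \<Longrightarrow> normal r \<Longrightarrow> \<exists>n. normal n \<and> fcong (Node GR l r) n"
proof (induction l arbitrary: r)
  case Leaf then show ?case by (intro exI[of _ "Node GR Leaf r"]) (simp add: fcong.refl)
next
  case (Node g a b)
  show ?case
  proof (cases g)
    case GA then show ?thesis using Node.prems by (intro exI[of _ "Node GR (Node g a b) r"]) (simp add: fcong.refl)
  next
    case GR
    with Node.prems have na: "normal a" "normal b" "\<not> isGR a" by auto
    from Node.IH(2)[OF na(2) Node.prems(2)] obtain u where u: "normal u" "fcong (Node GR b r) u" by blast
    have "fcong (Node GR (Node GR a b) r) (Node GR a u)"
      using fcong.trans[OF fcong_rot fcong_nodeR[OF u(2)]] .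
    moreover have "normal (Node GR a u)" using na u by simp
    ultimately show ?thesis using GR by blast
  qed
qed

lemma norm_ex: "\<exists>n. normal n \<and> fcong t n"
proof (induction t)
  case Leaf then show ?case by (intro exI[of _ Leaf]) (simp add: fcong.refl)
next
  case (Node g l r)
  from Node.IH obtain l' r' where l': "normal l'" "fcong l l'" and r': "normal r'" "fcong r r'" by blast
  have c: "fcong (Node g l r) (Node g l' r')"
    using fcong.trans[OF fcong_nodeL[OF l'(2)] fcong_nodeR[OF r'(2)]] .
  show ?case
  proof (cases g)
    case GA then show ?thesis using c l' r' by (intro exI[of _ "Node g l' r'"]) simp
  next
    case GR
    from norm_GR[OF l'(1) r'(1)] obtain n where "normal n" "fcong (Node GR l' r') n" by blast
    then show ?thesis using c GR fcong.trans by blast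
  qed
qed




lemma K1: "(1,k) \<in> Bl (Node g l r) \<Longrightarrow> k < arity l + arity r + 1 \<Longrightarrow>
   k \<le> arity l + 1 \<and> (g = GR \<longrightarrow> (1,k) \<in> Bl l \<and> k \<noteq> arity l + 1)"
  using arity_pos[of l] by (elim Bl_Node_E) auto

lemma K2: "(k, arity l + arity r + 1) \<in> Bl (Node g l r) \<Longrightarrow> 1 < k \<Longrightarrow>
   arity l + 1 \<le> k \<and> (g = GR \<longrightarrow> arity l + 2 \<le> k)"
  using arity_pos[of l] arity_pos[of r] by (elim Bl_Node_E) auto

lemma K3: "(a,k) \<in> Bl (Node g l r) \<Longrightarrow> 1 < a \<Longrightarrow> a \<le> arity l \<Longrightarrow> k \<le> arity l + 1"
  using arity_pos[of l] arity_pos[of r] by (elim Bl_Node_E) auto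

lemma Rec_l: "Bl l = insert (1, arity l + 1) {z \<in> Bl (Node g l r). snd z \<le> arity l + 1}"
proof (rule set_eqI)
  fix z :: "nat \<times> nat"
  obtain x y where z: "z = (x,y)" by (cases z)
  have q: "1 \<le> arity r" using arity_pos[of r] .
  show "z \<in> Bl l \<longleftrightarrow> z \<in> insert (1, arity l + 1) {z \<in> Bl (Node g l r). snd z \<le> arity l + 1}"
  proof
    assume "z \<in> Bl l"
    then show "z \<in> insert (1, arity l + 1) {z \<in> Bl (Node g l r). snd z \<le> arity l + 1}"
      unfolding z using Bl_range[of x y l] by (auto simp: mem_Bl_Node)
  next
    assume "z \<in> insert (1, arity l + 1) {z \<in> Bl (Node g l r). snd z \<le> arity l + 1}"
    then consider "z = (1, arity l + 1)" | "(x,y) \<in> Bl (Node g l r)" "y \<le> arity l + 1" unfolding z by auto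
    then show "z \<in> Bl l"
    proof cases
      case 1 then show ?thesis using Bl_base by simp
    next
      case 2
      from 2(1) show ?thesis
        by (cases rule: Bl_Node_E) (use 2(2) q z Bl_base[of l] in auto)
    qed
  qed
qed

lemma Rec_r: "Bl r = insert (1, arity r + 1) {(c,d). (c + arity l, d + arity l) \<in> Bl (Node g l r) \<and> 1 \<le> c}"
proof (rule set_eqI)
  fix z :: "nat \<times> nat"
  obtain x y where z: "z = (x,y)" by (cases z)
  have p: "1 \<le> arity l" using arity_pos[of l] .
  show "z \<in> Bl r \<longleftrightarrow> z \<in> insert (1, arity r + 1) {(c,d). (c + arity l, d + arity l) \<in> Bl (Node g l r) \<and> 1 \<le> c}"
  proof
    assume "z \<in> Bl r"
    then show "z \<in> insert (1, arity r + 1) {(c,d). (c + arity l, d + arity l) \<in> Bl (Node g l r) \<and> 1 \<le> c}"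
      unfolding z using Bl_range[of x y r] by (auto simp: mem_Bl_Node)
  next
    assume "z \<in> insert (1, arity r + 1) {(c,d). (c + arity l, d + arity l) \<in> Bl (Node g l r) \<and> 1 \<le> c}"
    then consider "z = (1, arity r + 1)" | "(x + arity l, y + arity l) \<in> Bl (Node g l r)" "1 \<le> x"
      unfolding z by auto
    then show "z \<in> Bl r"
    proof cases
      case 1 then show ?thesis using Bl_base by simp
    next
      case 2
      from 2(1) show ?thesis
      proof (cases rule: Bl_Node_E)
        case left then show ?thesis using 2(2) by simp
      qed (use 2(2) p z Bl_base[of r] in auto)
    qed
  qed
qed

lemma GA_arcs: "(1, arity l + 1) \<in> Bl (Node GA l r)" "(arity l + 1, arity l + arity r + 1) \<in> Bl (Node GA l r)"
  by (auto simp: mem_Bl_Node)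

declare Bl.simps(2)[simp del]

lemma GAl_arcs:
  "(1, arity ll + 1) \<in> Bl (Node g (Node GA ll lr) r)"
  "(arity ll + 1, arity ll + arity lr + 1) \<in> Bl (Node g (Node GA ll lr) r)"
  using arity_pos[of lr] arity_pos[of ll] arity_pos[of r] by (auto simp: mem_Bl_Node)

lemma inj_normal: "normal s \<Longrightarrow> normal t \<Longrightarrow> Bl s = Bl t \<Longrightarrow> arity s = arity t \<Longrightarrow> s = t"
proof (induction s arbitrary: t)
  case Leaf
  show ?case
  proof (cases t)
    case (Node g l r)
    then have "arity t \<ge> 2" using arity_pos[of l] arity_pos[of r] by simp
    with Leaf.prems show ?thesis by simp
  qed simp
next
  case (Node g l r)
  obtain g' l' r' where t: "t = Node g' l' r'"
    using Node.prems(4) arity_pos[of l] arity_pos[of r] by (cases t) auto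
  define p where "p = arity l"
  define p' where "p' = arity l'"
  have pp: "1 \<le> p" "1 \<le> p'" "1 \<le> arity r" "1 \<le> arity r'" using arity_pos p_def p'_def by auto
  have N: "p + arity r = p' + arity r'" using Node.prems(4) t p_def p'_def by simp
  have B: "Bl (Node g l r) = Bl (Node g' l' r')" using Node.prems(3) t by simp
  have gGA: "g' = GA" if "g = GA"
    and pp: "1 \<le> arity l" "1 \<le> arity r"
    and N: "arity l + arity r = arity l' + arity r'" and B: "Bl (Node g l r) = Bl (Node g' l' r')"
    for g g' l r l' r'
  proof (rule ccontr)
    assume "g' \<noteq> GA" then have g': "g' = GR" by (cases g') auto
    have a1: "(1, arity l + 1) \<in> Bl (Node g l r)" using GA_arcs(1)[of l r] that(1) by simp
    have a2: "(arity l + 1, arity l + arity r + 1) \<in> Bl (Node g l r)" using GA_arcs(2)[of l r] that(1) by simp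
    have "(1, arity l + 1) \<in> Bl (Node g' l' r')" using a1 unfolding B .
    moreover have "(arity l + 1, arity l' + arity r' + 1) \<in> Bl (Node g' l' r')" using a2 unfolding B N .
    ultimately have "(1, arity l + 1) \<in> Bl (Node g' l' r')" "(arity l + 1, arity l' + arity r' + 1) \<in> Bl (Node g' l' r')" by blast+
    from K1[OF this(1)] K2[OF this(2)] pp N g' show False by auto
  qed
  have gg: "g = g'"
  proof (cases g)
    case GA then show ?thesis using gGA[where g=g and g'=g' and l=l and r=r and l'=l' and r'=r'] pp N B p_def p'_def by simp
  next
    case GR
    have "g' \<noteq> GA" using gGA[where g=g' and g'=g and l=l' and r=r' and l'=l and r'=r] pp N B p_def p'_def GR by auto
    then show ?thesis using GR by (cases g') auto
  qed
  have "p = p'"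
  proof (cases g)
    case GA
    have a: "(1, p + 1) \<in> Bl (Node g' l' r')" "(p + 1, p' + arity r' + 1) \<in> Bl (Node g' l' r')"
      using GA_arcs[of l r] B N GA p_def by auto
    have "p + 1 \<le> p' + 1" using K1[OF a(1)[unfolded p'_def]] pp N p'_def by auto
    moreover have "p' + 1 \<le> p + 1" using K2[OF a(2)[unfolded p'_def]] pp p'_def by auto
    ultimately show ?thesis by simp
  next
    case GR
    then have g': "g' = GR" using gg by simp
    have nl: "\<not> isGR l" "\<not> isGR l'" using Node.prems(1,2) GR g' t by auto
    have lcases: "l = Leaf \<or> (\<exists>ll lr. l = Node GA ll lr)" if "\<not> isGR l" for l
      using that by (cases l rule: isGR.cases) auto
    have leafno: "False" if "(1,k) \<in> Bl (Node GR Leaf rr)" "1 < k" "k < arity rr + 2" for k rr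
      using K1[OF that(1)] that(2,3) by auto
    show ?thesis
    proof (cases "l = Leaf")
      case True
      show ?thesis
      proof (cases "l' = Leaf")
        case True then show ?thesis using \<open>l = Leaf\<close> p_def p'_def by simp
      next
        case False
        then obtain ll lr where l': "l' = Node GA ll lr" using lcases[OF nl(2)] by auto
        have "(1, arity ll + 1) \<in> Bl (Node g' l' r')" using GAl_arcs(1)[where ll=ll and lr=lr and g=g' and r=r'] l' by simp
        then have "(1, arity ll + 1) \<in> Bl (Node GR Leaf r)" using B GR \<open>l = Leaf\<close> by simp
        moreover have "1 < arity ll + 1" "arity ll + 1 < arity r + 2"
          using arity_pos[of ll] arity_pos[of lr] N l' p'_def \<open>l = Leaf\<close> p_def by auto
        ultimately show ?thesis using leafno by blast
      qed
    next
      case False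
      then obtain ll lr where l: "l = Node GA ll lr" using lcases[OF nl(1)] by auto
      show ?thesis
      proof (cases "l' = Leaf")
        case True
        have "(1, arity ll + 1) \<in> Bl (Node g l r)" using GAl_arcs(1)[where ll=ll and lr=lr and g=g and r=r] l by simp
        then have "(1, arity ll + 1) \<in> Bl (Node GR Leaf r')" using B g' True by simp
        moreover have "1 < arity ll + 1" "arity ll + 1 < arity r' + 2"
          using arity_pos[of ll] arity_pos[of lr] N l p_def True p'_def by auto
        ultimately show ?thesis using leafno by blast
      next
        case False
        then obtain ll' lr' where l': "l' = Node GA ll' lr'" using lcases[OF nl(2)] by auto
        have p1: "arity ll + 1 \<le> arity ll' + 1" if B: "Bl (Node GR (Node GA ll lr) r) = Bl (Node GR (Node GA ll' lr') r')"
          and N: "arity ll + arity lr + arity r = arity ll' + arity lr' + arity r'" for ll lr r ll' lr' r'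
        proof -
          have a: "(1, arity ll + 1) \<in> Bl (Node GR (Node GA ll' lr') r')"
            using GAl_arcs(1)[where ll=ll and lr=lr and g=GR and r=r] B by simp
          have "arity ll + 1 < arity (Node GA ll' lr') + arity r' + 1"
            using N arity_pos[of lr] arity_pos[of r] by simp
          from K1[OF a this] have m1: "(1, arity ll + 1) \<in> Bl (Node GA ll' lr')"
            and m2: "arity ll + 1 \<noteq> arity (Node GA ll' lr') + 1" by auto
          have "arity ll + 1 \<le> arity (Node GA ll' lr') + 1" using Bl_range[OF m1] by simp
          with m2 have "arity ll + 1 < arity ll' + arity lr' + 1" by simp
          from K1[OF m1 this] show ?thesis by simp
        qed
        have e1: "arity ll = arity ll'"
          using p1[where ll=ll and lr=lr and r=r and ll'=ll' and lr'=lr' and r'=r'] p1[where ll=ll' and lr=lr' and r=r' and ll'=ll and lr'=lr and r'=r] B N GR g' l l' p_def p'_def by fastforce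
        have p2: "arity lr \<le> arity lr'"
          if B: "Bl (Node GR (Node GA ll lr) r) = Bl (Node GR (Node GA ll' lr') r')"
          and E: "arity ll = arity ll'" for ll lr r ll' lr' r'
        proof -
          have "(arity ll + 1, arity ll + arity lr + 1) \<in> Bl (Node GR (Node GA ll lr) r)"
            by (rule GAl_arcs(2))
          then have a: "(arity ll + 1, arity ll + arity lr + 1) \<in> Bl (Node GR (Node GA ll' lr') r')"
            unfolding B .
          show ?thesis
            using K3[OF a] arity_pos[of ll] arity_pos[of lr'] E by simp
        qed
        have "arity lr = arity lr'"
          using p2[where ll=ll and lr=lr and r=r and ll'=ll' and lr'=lr' and r'=r'] p2[where ll=ll' and lr=lr' and r=r' and ll'=ll and lr'=lr and r'=r] B GR g' l l' e1 by fastforce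
        then show ?thesis using e1 l l' p_def p'_def by simp
      qed
    qed
  qed
  have L: "Bl l = Bl l'" using Rec_l[of l g r] Rec_l[of l' g' r'] B \<open>p = p'\<close> p_def p'_def by simp
  have q: "arity r = arity r'" using N \<open>p = p'\<close> by simp
  have R: "Bl r = Bl r'" using Rec_r[of r l g] Rec_r[of r' l' g'] B \<open>p = p'\<close> p_def p'_def q by simp
  have nrm: "normal l" "normal r" "normal l'" "normal r'"
    using Node.prems(1,2) t by (cases g; cases g'; auto)+
  have "l = l'" using Node.IH(1)[OF nrm(1,3) L] \<open>p = p'\<close> p_def p'_def by simp
  moreover have "r = r'" using Node.IH(2)[OF nrm(2,4) R q] .
  ultimately show ?case using t gg by simp
qed




lemma feval_inj_norm: "feval s = feval t \<Longrightarrow> fcong s t"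
proof -
  assume e: "feval s = feval t"
  obtain ns where ns: "normal ns" "fcong s ns" using norm_ex by blast
  obtain nt where nt: "normal nt" "fcong t nt" using norm_ex by blast
  have "feval ns = feval nt" using e fcong_feval[OF ns(2)] fcong_feval[OF nt(2)] by simp
  then have "arity ns = arity nt" "Bl ns = Bl nt" unfolding feval_mk mk_def by simp_all
  then have "ns = nt" using inj_normal ns(1) nt(1) by blast
  then show ?thesis using ns(2) nt(2) fcong.sym fcong.trans by metis
qed

theorem theorem3p18:
  shows "(\<forall>s t i. 1 \<le> i \<and> i \<le> arity s \<longrightarrow>
            feval (graft s i t) = bnc_comp (feval s) i (feval t))
       \<and> feval ` UNIV = gen_sub
       \<and> (\<forall>s t. feval s = feval t \<longleftrightarrow> fcong s t)"
proof (intro conjI allI impI)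
  fix s t i assume "1 \<le> i \<and> i \<le> arity s"
  then show "feval (graft s i t) = bnc_comp (feval s) i (feval t)" using feval_graft by blast
next
  show "feval ` UNIV = gen_sub" using range_sub sub_range by blast
next
  fix s t
  show "feval s = feval t \<longleftrightarrow> fcong s t" using feval_inj_norm fcong_feval by blast
qed


end
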